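(* Let $(\mathbf{F},\Delta)$ be a poset comonoid and $(\mathbf{F},\Box)$ a poset monoid on the same poset species which form an adjoint pair with $\Delta\dashv\Box$. Then the vector space monoid $(\mathbf{k}\mathbf{F},\Box)$ is isomorphic to the dual monoid $(\mathbf{k}\mathbf{F}^*,\Delta^* )$, via the isomorphism sending each basis element $x\in\mathbf{F}[I]$ to $\omega_x^*$, where $\{\omega_x^*\}_{x\in\mathbf{F}[I]}$ is the basis of $\mathbf{k}\mathbf{F}[I]^*$ dual to the inverted basis $\{\omega_x\}_{x\in\mathbf{F}[I]}$ of $\mathbf{k}\mathbf{F}[I]$.
   Context: $\mathbf{k}$ is a field of characteristic $0$. A (connected) poset species $\mathbf{F}$ assigns to each finite set $I$ a locally finite poset $\mathbf{F}[I]$, with $\mathbf{F}[\emptyset]$ a singleton $\{1\}$, and to each bijection $f:I\to J$ an order-preserving bijection $\mathbf{F}[f]$, functorially. A poset monoid $(\mathbf{F},\Box)$: order-preserving maps $\Box_{S,T}:\mathbf{F}[S]\times\mathbf{F}[T]\to\mathbf{F}[S\sqcup T]$ for disjoint finite $S,T$, natural in bijections, associative, unital with unit $1$. A poset comonoid $(\mathbf{F},\Delta)$: order-preserving maps $\Delta_{S,T}:\mathbf{F}[S\sqcup T]\to\mathbf{F}[S]\times\mathbf{F}[T]$, natural, coassociative, counital ($\Delta_{I,\emptyset}(x)=(x,1)$, $\Delta_{\emptyset,I}(x)=(1,x)$). Adjoint pair $\Delta\dashv\Box$: $\Delta_{S,T}(x)\le(y,z)\iff x\le\Box_{S,T}(y,z)$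 for all $x,y,z$ (product order). The linearization $\mathbf{k}\mathbf{F}$ has $\mathbf{k}\mathbf{F}[I]$ the vector space with basis $\mathbf{F}[I]$, with $\Box,\Delta$ extended linearly ($\Delta_{S,T}(x)=y\otimes z$ when $\Delta_{S,T}(x)=(y,z)$); this gives a vector space monoid $(\mathbf{k}\mathbf{F},\Box)$ and a vector space comonoid $(\mathbf{k}\mathbf{F},\Delta)$. The dual monoid $(\mathbf{k}\mathbf{F}^*,\Delta^* )$ has components $\mathbf{k}\mathbf{F}[I]^*$ and multiplication $\Delta^*_{S,T}(\varphi\otimes\psi)=(\varphi\otimes\psi)\circ\Delta_{S,T}$. The inverted basis is $\omega_x=\sum_{x\le y}\mu(x,y)\,y$, $\mu$ the Möbius function of $\mathbf{F}[I]$. An isomorphism of vector space monoids is a family of linear isomorphisms, natural in bijections, commuting with the multiplications. *)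

theory Defs
  imports Main
begin

text \<open>F I is the poset F[I] (carrier), le I its order, Fmap f I the map F[f] for a
bijection f : I -> f`I, one the unique element of F[{}].\<close>

definition poset_species ::
  "('i set \<Rightarrow> 'a set) \<Rightarrow> ('i set \<Rightarrow> 'a \<Rightarrow> 'a \<Rightarrow> bool) \<Rightarrow>
   (('i \<Rightarrow> 'i) \<Rightarrow> 'i set \<Rightarrow> 'a \<Rightarrow> 'a) \<Rightarrow> 'a \<Rightarrow> bool" where
  "poset_species F le Fmap one \<longleftrightarrow>
     (\<forall>I. finite I \<longrightarrow> finite (F I)
        \<and> (\<forall>x\<in>F I. le I x x)
        \<and> (\<forall>x\<in>F I. \<forall>y\<in>F I. le I x y \<and> le I y x \<longrightarrow> x = y)
        \<and> (\<forall>x\<in>F I. \<forall>y\<in>F I. \<forall>z\<in>F I. le I x y \<and> le I y z \<longrightarrow> le I x z))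
   \<and> F {} = {one}
   \<and> (\<forall>f I J. finite I \<and> bij_betw f I J \<longrightarrow>
        bij_betw (Fmap f I) (F I) (F J)
        \<and> (\<forall>x\<in>F I. \<forall>y\<in>F I. le I x y \<longrightarrow> le J (Fmap f I x) (Fmap f I y)))
   \<and> (\<forall>I. finite I \<longrightarrow> (\<forall>x\<in>F I. Fmap id I x = x))
   \<and> (\<forall>f g I J. finite I \<and> bij_betw f I J \<and> bij_betw g J (g ` J) \<longrightarrow>
        (\<forall>x\<in>F I. Fmap (g \<circ> f) I x = Fmap g J (Fmap f I x)))"

definition poset_monoid ::
  "('i set \<Rightarrow> 'a set) \<Rightarrow> ('i set \<Rightarrow> 'a \<Rightarrow> 'a \<Rightarrow> bool) \<Rightarrow>
   (('i \<Rightarrow> 'i) \<Rightarrow> 'i set \<Rightarrow> 'a \<Rightarrow> 'a) \<Rightarrow> 'a \<Rightarrow>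
   ('i set \<Rightarrow> 'i set \<Rightarrow> 'a \<Rightarrow> 'a \<Rightarrow> 'a) \<Rightarrow> bool" where
  "poset_monoid F le Fmap one Box \<longleftrightarrow>
     (\<forall>S T. finite S \<and> finite T \<and> S \<inter> T = {} \<longrightarrow>
        (\<forall>y\<in>F S. \<forall>z\<in>F T. Box S T y z \<in> F (S \<union> T))
        \<and> (\<forall>y\<in>F S. \<forall>y'\<in>F S. \<forall>z\<in>F T. \<forall>z'\<in>F T.
              le S y y' \<and> le T z z' \<longrightarrow> le (S \<union> T) (Box S T y z) (Box S T y' z'))
        \<and> (\<forall>f J. bij_betw f (S \<union> T) J \<longrightarrow>
              (\<forall>y\<in>F S. \<forall>z\<in>F T.
                 Fmap f (S \<union> T) (Box S T y z) = Box (f ` S) (f ` T) (Fmap f S y) (Fmap f T z))))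
   \<and> (\<forall>R S T. finite R \<and> finite S \<and> finite T \<and> R \<inter> S = {} \<and> R \<inter> T = {} \<and> S \<inter> T = {} \<longrightarrow>
        (\<forall>x\<in>F R. \<forall>y\<in>F S. \<forall>z\<in>F T.
           Box (R \<union> S) T (Box R S x y) z = Box R (S \<union> T) x (Box S T y z)))
   \<and> (\<forall>I. finite I \<longrightarrow> (\<forall>x\<in>F I. Box {} I one x = x \<and> Box I {} x one = x))"

definition poset_comonoid ::
  "('i set \<Rightarrow> 'a set) \<Rightarrow> ('i set \<Rightarrow> 'a \<Rightarrow> 'a \<Rightarrow> bool) \<Rightarrow>
   (('i \<Rightarrow> 'i) \<Rightarrow> 'i set \<Rightarrow> 'a \<Rightarrow> 'a) \<Rightarrow> 'a \<Rightarrow>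
   ('i set \<Rightarrow> 'i set \<Rightarrow> 'a \<Rightarrow> 'a \<times> 'a) \<Rightarrow> bool" where
  "poset_comonoid F le Fmap one Delta \<longleftrightarrow>
     (\<forall>S T. finite S \<and> finite T \<and> S \<inter> T = {} \<longrightarrow>
        (\<forall>x\<in>F (S \<union> T). fst (Delta S T x) \<in> F S \<and> snd (Delta S T x) \<in> F T)
        \<and> (\<forall>x\<in>F (S \<union> T). \<forall>x'\<in>F (S \<union> T). le (S \<union> T) x x' \<longrightarrow>
              le S (fst (Delta S T x)) (fst (Delta S T x'))
              \<and> le T (snd (Delta S T x)) (snd (Delta S T x')))
        \<and> (\<forall>f J. bij_betw f (S \<union> T) J \<longrightarrow>
              (\<forall>x\<in>F (S \<union> T).
                 Delta (f ` S) (f ` T) (Fmap f (S \<union> T) x)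
                 = (Fmap f S (fst (Delta S T x)), Fmap f T (snd (Delta S T x))))))
   \<and> (\<forall>R S T. finite R \<and> finite S \<and> finite T \<and> R \<inter> S = {} \<and> R \<inter> T = {} \<and> S \<inter> T = {} \<longrightarrow>
        (\<forall>x\<in>F (R \<union> S \<union> T).
           Delta R S (fst (Delta (R \<union> S) T x)) = (fst (Delta R (S \<union> T) x),
                                                   fst (Delta S T (snd (Delta R (S \<union> T) x))))
           \<and> snd (Delta (R \<union> S) T x) = snd (Delta S T (snd (Delta R (S \<union> T) x)))))
   \<and> (\<forall>I. finite I \<longrightarrow> (\<forall>x\<in>F I. Delta I {} x = (x, one) \<and> Delta {} I x = (one, x)))"

definition adjoint_pair ::
  "('i set \<Rightarrow> 'a set) \<Rightarrow> ('i set \<Rightarrow> 'a \<Rightarrow> 'a \<Rightarrow> bool) \<Rightarrow>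
   ('i set \<Rightarrow> 'i set \<Rightarrow> 'a \<Rightarrow> 'a \<times> 'a) \<Rightarrow> ('i set \<Rightarrow> 'i set \<Rightarrow> 'a \<Rightarrow> 'a \<Rightarrow> 'a) \<Rightarrow> bool" where
  "adjoint_pair F le Delta Box \<longleftrightarrow>
     (\<forall>S T. finite S \<and> finite T \<and> S \<inter> T = {} \<longrightarrow>
        (\<forall>x\<in>F (S \<union> T). \<forall>y\<in>F S. \<forall>z\<in>F T.
           (le S (fst (Delta S T x)) y \<and> le T (snd (Delta S T x)) z)
           \<longleftrightarrow> le (S \<union> T) x (Box S T y z)))"

text \<open>A vector of kF[I] is a function 'a => 'k vanishing outside F I (coefficients in
the basis F I).  A functional in kF[I]^* is represented by its values on the basis F I,
again a function 'a => 'k vanishing outside F I.\<close>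

definition vec :: "('i set \<Rightarrow> 'a set) \<Rightarrow> 'i set \<Rightarrow> ('a \<Rightarrow> 'k::zero) \<Rightarrow> bool" where
  "vec F I u \<longleftrightarrow> (\<forall>a. a \<notin> F I \<longrightarrow> u a = 0)"

definition pair :: "'a set \<Rightarrow> ('a \<Rightarrow> 'k::comm_ring_1) \<Rightarrow> ('a \<Rightarrow> 'k) \<Rightarrow> 'k" where
  "pair A phi v = (\<Sum>w\<in>A. phi w * v w)"

definition mobius :: "'a set \<Rightarrow> ('a \<Rightarrow> 'a \<Rightarrow> bool) \<Rightarrow> 'a \<Rightarrow> 'a \<Rightarrow> 'k::comm_ring_1" where
  "mobius A le = (THE mu. (\<forall>x y. mu x y \<noteq> 0 \<longrightarrow> x \<in> A \<and> y \<in> A \<and> le x y)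
       \<and> (\<forall>x\<in>A. \<forall>y\<in>A. le x y \<longrightarrow>
            (\<Sum>z\<in>{z\<in>A. le x z \<and> le z y}. mu x z) = (if x = y then 1 else 0)))"

definition omega :: "'a set \<Rightarrow> ('a \<Rightarrow> 'a \<Rightarrow> bool) \<Rightarrow> 'a \<Rightarrow> ('a \<Rightarrow> 'k::comm_ring_1)" where
  "omega A le x = (\<lambda>y. if y \<in> A \<and> le x y then mobius A le x y else 0)"

definition dual_omega :: "'a set \<Rightarrow> ('a \<Rightarrow> 'a \<Rightarrow> bool) \<Rightarrow> 'a \<Rightarrow> ('a \<Rightarrow> 'k::comm_ring_1)" where
  "dual_omega A le x = (THE phi. (\<forall>a. a \<notin> A \<longrightarrow> phi a = 0)
       \<and> (\<forall>y\<in>A. pair A phi (omega A le y) = (if x = y then 1 else 0)))"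

definition Phi :: "('i set \<Rightarrow> 'a set) \<Rightarrow> ('i set \<Rightarrow> 'a \<Rightarrow> 'a \<Rightarrow> bool) \<Rightarrow> 'i set \<Rightarrow>
    ('a \<Rightarrow> 'k::comm_ring_1) \<Rightarrow> ('a \<Rightarrow> 'k)" where
  "Phi F le I u = (\<lambda>a. \<Sum>x\<in>F I. u x * dual_omega (F I) (le I) x a)"

definition box_mult :: "('i set \<Rightarrow> 'a set) \<Rightarrow> ('i set \<Rightarrow> 'i set \<Rightarrow> 'a \<Rightarrow> 'a \<Rightarrow> 'a) \<Rightarrow>
    'i set \<Rightarrow> 'i set \<Rightarrow> ('a \<Rightarrow> 'k::comm_ring_1) \<Rightarrow> ('a \<Rightarrow> 'k) \<Rightarrow> ('a \<Rightarrow> 'k)" where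
  "box_mult F Box S T u v =
     (\<lambda>x. \<Sum>p\<in>{p \<in> F S \<times> F T. Box S T (fst p) (snd p) = x}. u (fst p) * v (snd p))"

definition delta_dual_mult :: "('i set \<Rightarrow> 'a set) \<Rightarrow> ('i set \<Rightarrow> 'i set \<Rightarrow> 'a \<Rightarrow> 'a \<times> 'a) \<Rightarrow>
    'i set \<Rightarrow> 'i set \<Rightarrow> ('a \<Rightarrow> 'k::comm_ring_1) \<Rightarrow> ('a \<Rightarrow> 'k) \<Rightarrow> ('a \<Rightarrow> 'k)" where
  "delta_dual_mult F Delta S T phi psi =
     (\<lambda>x. if x \<in> F (S \<union> T) then phi (fst (Delta S T x)) * psi (snd (Delta S T x)) else 0)"

text \<open>Action of a bijection f : I -> J on kF[I] (and, identically under the basis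
identification, on kF[I]^*, where it is the transpose of kF[f^-1]).\<close>
definition transport :: "('i set \<Rightarrow> 'a set) \<Rightarrow> (('i \<Rightarrow> 'i) \<Rightarrow> 'i set \<Rightarrow> 'a \<Rightarrow> 'a) \<Rightarrow>
    ('i \<Rightarrow> 'i) \<Rightarrow> 'i set \<Rightarrow> ('a \<Rightarrow> 'k::comm_ring_1) \<Rightarrow> ('a \<Rightarrow> 'k)" where
  "transport F Fmap f I u = (\<lambda>b. \<Sum>a\<in>{a\<in>F I. Fmap f I a = b}. u a)"

end

theory Submission
  imports Defs
begin

definition fpos :: "'a set \<Rightarrow> ('a \<Rightarrow> 'a \<Rightarrow> bool) \<Rightarrow> bool" where
  "fpos A le \<longleftrightarrow> finite A \<and> (\<forall>x\<in>A. le x x)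
     \<and> (\<forall>x\<in>A. \<forall>y\<in>A. le x y \<and> le y x \<longrightarrow> x = y)
     \<and> (\<forall>x\<in>A. \<forall>y\<in>A. \<forall>z\<in>A. le x y \<and> le y z \<longrightarrow> le x z)"

definition below :: "'a set \<Rightarrow> ('a \<Rightarrow> 'a \<Rightarrow> bool) \<Rightarrow> ('a \<times> 'a) set" where
  "below A le = {(z,y). z \<in> A \<and> y \<in> A \<and> le z y \<and> z \<noteq> y}"

lemma fpos_fin: "fpos A le \<Longrightarrow> finite A"
  unfolding fpos_def by blast
lemma fpos_refl: "fpos A le \<Longrightarrow> x \<in> A \<Longrightarrow> le x x"
  unfolding fpos_def by blast
lemma fpos_antisym: "fpos A le \<Longrightarrow> x \<in> A \<Longrightarrow> y \<in> A \<Longrightarrow> le x y \<Longrightarrow> le y x \<Longrightarrow> x = y"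
  unfolding fpos_def by blast
lemma fpos_trans: "fpos A le \<Longrightarrow> x \<in> A \<Longrightarrow> y \<in> A \<Longrightarrow> z \<in> A \<Longrightarrow> le x y \<Longrightarrow> le y z \<Longrightarrow> le x z"
  unfolding fpos_def by blast
lemma fpos_single: "fpos A le \<Longrightarrow> x \<in> A \<Longrightarrow> {z\<in>A. le x z \<and> le z x} = {x}"
  using fpos_refl[of A le x] fpos_antisym[of A le x] by blast

lemma fpos_flip: "fpos A le \<Longrightarrow> fpos A (\<lambda>x y. le y x)"
  unfolding fpos_def by blast

lemma wf_below: assumes "fpos A le" shows "wf (below A le)"
proof (rule finite_acyclic_wf)
  have "below A le \<subseteq> A \<times> A" unfolding below_def by auto
  then show "finite (below A le)" using fpos_fin[OF assms] by (meson finite_SigmaI finite_subset)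
  have tr: "trans (below A le)"
  proof (rule transI)
    fix x y z assume a: "(x, y) \<in> below A le" "(y, z) \<in> below A le"
    then have m: "x \<in> A" "y \<in> A" "z \<in> A" "le x y" "le y z" "x \<noteq> y" unfolding below_def by auto
    have "le x z" using fpos_trans[OF assms m(1-5)] .
    moreover have "x \<noteq> z" using fpos_antisym[OF assms m(1,2,4)] m(5,6) by blast
    ultimately show "(x, z) \<in> below A le" using m unfolding below_def by auto
  qed
  have "irrefl (below A le)" unfolding below_def irrefl_def by auto
  then show "acyclic (below A le)" using tr by (simp add: acyclic_irrefl)
qed

lemma wf_above: assumes "fpos A le" shows "wf (below A (\<lambda>x y. le y x))"
  using wf_below[OF fpos_flip[OF assms]] .

definition mobspec :: "'a set \<Rightarrow> ('a \<Rightarrow> 'a \<Rightarrow> bool) \<Rightarrow> ('a \<Rightarrow> 'a \<Rightarrow> 'k::comm_ring_1) \<Rightarrow> bool" where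
  "mobspec A le mu \<longleftrightarrow> (\<forall>x y. mu x y \<noteq> 0 \<longrightarrow> x \<in> A \<and> y \<in> A \<and> le x y)
       \<and> (\<forall>x\<in>A. \<forall>y\<in>A. le x y \<longrightarrow>
            (\<Sum>z\<in>{z\<in>A. le x z \<and> le z y}. mu x z) = (if x = y then 1 else 0))"

lemma split_top: assumes "fpos A le" "x \<in> A" "y \<in> A" "le x y"
  shows "{z\<in>A. le x z \<and> le z y} = insert y {z\<in>A. le x z \<and> le z y \<and> z \<noteq> y}"
  using fpos_refl[OF assms(1,3)] assms(2-4) by auto

lemma mob_ex: assumes P: "fpos A le" shows "\<exists>mu::'a \<Rightarrow> 'a \<Rightarrow> 'k::comm_ring_1. mobspec A le mu"
proof -
  let ?R = "below A le"
  define H where "H = (\<lambda>x (r::'a \<Rightarrow> 'k) y. if y = x then 1 else - (\<Sum>z\<in>{z\<in>A. le x z \<and> le z y \<and> z \<noteq> y}. r z))"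
  define m where "m = (\<lambda>x. wfrec ?R (H x))"
  have fin: "finite A" using fpos_fin[OF P] .
  have meq: "m x y = (if y = x then 1 else - (\<Sum>z\<in>{z\<in>A. le x z \<and> le z y \<and> z \<noteq> y}. m x z))"
    if "y \<in> A" for x y
  proof -
    have "m x y = H x (cut (m x) ?R y) y" unfolding m_def by (rule wfrec[OF wf_below[OF P]])
    also have "\<dots> = (if y = x then 1 else - (\<Sum>z\<in>{z\<in>A. le x z \<and> le z y \<and> z \<noteq> y}. m x z))"
      unfolding H_def
      by (auto intro!: sum.cong cut_apply simp: below_def that)
    finally show ?thesis .
  qed
  define mu where "mu = (\<lambda>x y. if x \<in> A \<and> y \<in> A \<and> le x y then m x y else (0::'k))"
  have c1: "\<forall>x y. mu x y \<noteq> 0 \<longrightarrow> x \<in> A \<and> y \<in> A \<and> le x y"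
    unfolding mu_def by (auto split: if_splits)
  have c2: "(\<Sum>z\<in>{z\<in>A. le x z \<and> le z y}. mu x z) = (if x = y then 1 else 0)"
    if xy: "x \<in> A" "y \<in> A" "le x y" for x y
  proof -
    have s: "(\<Sum>z\<in>{z\<in>A. le x z \<and> le z y}. mu x z) = (\<Sum>z\<in>{z\<in>A. le x z \<and> le z y}. m x z)"
      by (rule sum.cong) (auto simp: mu_def xy)
    show ?thesis
    proof (cases "x = y")
      case True
      then have "{z\<in>A. le x z \<and> le z y} = {x}" using fpos_single[OF P xy(1)] by simp
      then show ?thesis using s True meq[OF xy(1)] by simp
    next
      case False
      have "(\<Sum>z\<in>{z\<in>A. le x z \<and> le z y}. m x z) = m x y + (\<Sum>z\<in>{z\<in>A. le x z \<and> le z y \<and> z \<noteq> y}. m x z)"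
        unfolding split_top[OF P xy] using fin by (subst sum.insert) auto
      also have "\<dots> = 0" using meq[OF xy(2), of x] False by simp
      finally show ?thesis using s False by simp
    qed
  qed
  have "mobspec A le mu" unfolding mobspec_def by (rule conjI[OF c1], intro ballI impI c2)
  then show ?thesis by blast
qed

lemma mob_unique: assumes P: "fpos A le" and m1: "mobspec A le (mu::'a \<Rightarrow> 'a \<Rightarrow> 'k::comm_ring_1)"
  and m2: "mobspec A le mu'" shows "mu = mu'"
proof (intro ext)
  fix x y
  have fin: "finite A" using fpos_fin[OF P] .
  show "mu x y = mu' x y"
  proof (cases "x \<in> A \<and> y \<in> A \<and> le x y")
    case False
    have "mu x y = 0" using m1 False unfolding mobspec_def by blast
    moreover have "mu' x y = 0" using m2 False unfolding mobspec_def by blast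
    ultimately show ?thesis by simp
  next
    case True
    have "\<forall>y. y \<in> A \<and> le x y \<longrightarrow> mu x y = mu' x y"
    proof (intro allI)
      fix y show "y \<in> A \<and> le x y \<longrightarrow> mu x y = mu' x y"
      proof (induction y rule: wf_induct[OF wf_below[OF P]])
        case (1 y)
        show ?case
        proof
          assume y: "y \<in> A \<and> le x y"
          have eq: "(\<Sum>z\<in>{z\<in>A. le x z \<and> le z y \<and> z \<noteq> y}. mu x z) = (\<Sum>z\<in>{z\<in>A. le x z \<and> le z y \<and> z \<noteq> y}. mu' x z)"
            by (rule sum.cong) (auto intro!: 1[rule_format] simp: below_def y)
          have "(\<Sum>z\<in>{z\<in>A. le x z \<and> le z y}. mu x z) = (\<Sum>z\<in>{z\<in>A. le x z \<and> le z y}. mu' x z)"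
            using m1 m2 True y unfolding mobspec_def by auto
          then have "mu x y + (\<Sum>z\<in>{z\<in>A. le x z \<and> le z y \<and> z \<noteq> y}. mu x z) = mu' x y + (\<Sum>z\<in>{z\<in>A. le x z \<and> le z y \<and> z \<noteq> y}. mu' x z)"
            unfolding split_top[OF P conjunct1[OF True] conjunct1[OF y] conjunct2[OF y]] using fin by (simp add: sum.insert)
          then show "mu x y = mu' x y" using eq by simp
        qed
      qed
    qed
    then show ?thesis using True by blast
  qed
qed

lemma mobius_spec: assumes P: "fpos A le" shows "mobspec A le (mobius A le :: 'a \<Rightarrow> 'a \<Rightarrow> 'k::comm_ring_1)"
proof -
  have e: "\<exists>!mu::'a \<Rightarrow> 'a \<Rightarrow> 'k. mobspec A le mu" using mob_ex[OF P] mob_unique[OF P] by blast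
  have "mobius A le = (THE mu::'a \<Rightarrow> 'a \<Rightarrow> 'k. mobspec A le mu)" unfolding mobius_def mobspec_def ..
  then show ?thesis using theI'[OF e] by simp
qed

lemma mobius_diag: assumes P: "fpos A le" "x \<in> A" shows "(mobius A le x x :: 'k::comm_ring_1) = 1"
proof -
  have "{z\<in>A. le x z \<and> le z x} = {x}" using fpos_single[OF assms] .
  moreover have "(\<Sum>z\<in>{z\<in>A. le x z \<and> le z x}. (mobius A le x z :: 'k)) = (if x = x then 1 else 0)"
    using mobius_spec[OF P(1), where 'k='k, unfolded mobspec_def] fpos_refl[OF P] P(2) by blast
  ultimately show ?thesis by simp
qed



lemma top_zero:
  assumes P: "fpos A le" and van: "\<forall>a. a \<notin> A \<longrightarrow> psi a = 0"
    and h: "\<forall>y\<in>A. (\<Sum>w\<in>A. psi w * omega A le y w) = (0::'k::comm_ring_1)"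
  shows "psi = (\<lambda>_. 0)"
proof -
  have fin: "finite A" using fpos_fin[OF P] .
  have "\<forall>y. y \<in> A \<longrightarrow> psi y = 0"
  proof
    fix y show "y \<in> A \<longrightarrow> psi y = 0"
    proof (induction y rule: wf_induct[OF wf_above[OF P]])
      case (1 y)
      show ?case
      proof
        assume y: "y \<in> A"
        have z: "(\<Sum>w\<in>A - {y}. psi w * omega A le y w) = 0"
        proof (rule sum.neutral, rule ballI)
          fix w assume w: "w \<in> A - {y}"
          show "psi w * omega A le y w = 0"
          proof (cases "le y w")
            case True
            then have "(w, y) \<in> below A (\<lambda>x y. le y x)" using w y unfolding below_def by auto
            then show ?thesis using 1 w by auto
          next
            case False then show ?thesis unfolding omega_def by simp
          qed
        qed
        have "(\<Sum>w\<in>A. psi w * omega A le y w) = psi y * omega A le y y + (\<Sum>w\<in>A - {y}. psi w * omega A le y w)"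
          using fin y by (rule sum.remove)
        also have "omega A le y y = (1::'k)" unfolding omega_def using mobius_diag[OF P y] fpos_refl[OF P y] y by simp
        finally show "psi y = 0" using h y z by simp
      qed
    qed
  qed
  then show ?thesis using van by auto
qed

lemma up_zero:
  assumes P: "fpos A le"
    and h: "\<forall>a\<in>A. (\<Sum>x\<in>{x\<in>A. le a x}. w x) = (0::'k::comm_ring_1)"
  shows "\<forall>a\<in>A. w a = 0"
proof -
  have fin: "finite A" using fpos_fin[OF P] .
  have "\<forall>y. y \<in> A \<longrightarrow> w y = 0"
  proof
    fix y show "y \<in> A \<longrightarrow> w y = 0"
    proof (induction y rule: wf_induct[OF wf_above[OF P]])
      case (1 y)
      show ?case
      proof
        assume y: "y \<in> A"
        have z: "(\<Sum>x\<in>{x\<in>A. le y x} - {y}. w x) = 0"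
        proof (rule sum.neutral, rule ballI)
          fix x assume x: "x \<in> {x\<in>A. le y x} - {y}"
          then have "(x, y) \<in> below A (\<lambda>x y. le y x)" using y unfolding below_def by auto
          then show "w x = 0" using 1 x by auto
        qed
        have yin: "y \<in> {x\<in>A. le y x}" using y fpos_refl[OF P y] by simp
        have "(\<Sum>x\<in>{x\<in>A. le y x}. w x) = w y + (\<Sum>x\<in>{x\<in>A. le y x} - {y}. w x)"
          using fin yin by (intro sum.remove) auto
        then show "w y = 0" using h y z by simp
      qed
    qed
  qed
  then show ?thesis by auto
qed

lemma dual_omega_eq:
  assumes P: "fpos A le" and x: "x \<in> A"
  shows "(dual_omega A le x :: 'a \<Rightarrow> 'k::comm_ring_1) = (\<lambda>w. if w \<in> A \<and> le w x then 1 else 0)"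
  unfolding dual_omega_def
proof (rule the_equality)
  let ?c = "(\<lambda>w. if w \<in> A \<and> le w x then 1 else 0) :: 'a \<Rightarrow> 'k"
  have fin: "finite A" using fpos_fin[OF P] .
  have ms: "mobspec A le (mobius A le :: 'a \<Rightarrow> 'a \<Rightarrow> 'k)" by (rule mobius_spec[OF P])
  have pc: "pair A ?c (omega A le y) = (if x = y then 1 else 0)" if y: "y \<in> A" for y
  proof -
    have "pair A ?c (omega A le y) = (\<Sum>w\<in>A. if le y w \<and> le w x then (mobius A le y w :: 'k) else 0)"
      unfolding pair_def omega_def by (rule sum.cong) auto
    also have "\<dots> = (\<Sum>w\<in>{w\<in>A. le y w \<and> le w x}. mobius A le y w)"
      using fin by (simp add: sum.inter_filter)
    also have "\<dots> = (if x = y then 1 else 0)"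
    proof (cases "le y x")
      case True
      then show ?thesis using ms x y unfolding mobspec_def by auto
    next
      case False
      then have e: "{w\<in>A. le y w \<and> le w x} = {}" using fpos_trans[OF P y _ x] False by blast
      have "x \<noteq> y" using False fpos_refl[OF P y] by auto
      then show ?thesis unfolding e by simp
    qed
    finally show ?thesis .
  qed
  show "(\<forall>a. a \<notin> A \<longrightarrow> ?c a = 0) \<and> (\<forall>y\<in>A. pair A ?c (omega A le y) = (if x = y then 1 else 0))"
    using pc by simp
  fix phi :: "'a \<Rightarrow> 'k"
  assume ph: "(\<forall>a. a \<notin> A \<longrightarrow> phi a = 0) \<and> (\<forall>y\<in>A. pair A phi (omega A le y) = (if x = y then 1 else 0))"
  define psi where "psi = (\<lambda>a. phi a - ?c a)"
  have "psi = (\<lambda>_. 0)"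
  proof (rule top_zero[OF P])
    show "\<forall>a. a \<notin> A \<longrightarrow> psi a = 0" using ph unfolding psi_def by simp
    show "\<forall>y\<in>A. (\<Sum>w\<in>A. psi w * omega A le y w) = 0"
    proof
      fix y assume y: "y \<in> A"
      have "(\<Sum>w\<in>A. psi w * omega A le y w) = pair A phi (omega A le y) - pair A ?c (omega A le y)"
        unfolding psi_def pair_def by (simp add: sum_subtractf left_diff_distrib)
      then show "(\<Sum>w\<in>A. psi w * omega A le y w) = 0" using ph pc[OF y] y by simp
    qed
  qed
  then show "phi = ?c" unfolding psi_def by (metis (no_types, lifting) eq_iff_diff_eq_0 ext)
qed

definition U :: "'a set \<Rightarrow> ('a \<Rightarrow> 'a \<Rightarrow> bool) \<Rightarrow> ('a \<Rightarrow> 'k::comm_ring_1) \<Rightarrow> ('a \<Rightarrow> 'k)" where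
  "U A le u = (\<lambda>a. if a \<in> A then (\<Sum>x\<in>{x\<in>A. le a x}. u x) else 0)"

lemma Phi_eq: assumes P: "fpos (F I) (le I)"
  shows "Phi F le I (u :: 'a \<Rightarrow> 'k::comm_ring_1) = U (F I) (le I) u"
proof
  fix a
  have fin: "finite (F I)" using fpos_fin[OF P] .
  have "Phi F le I u a = (\<Sum>x\<in>F I. if a \<in> F I \<and> le I a x then u x else 0)"
    unfolding Phi_def by (rule sum.cong) (auto simp: dual_omega_eq[OF P])
  also have "\<dots> = U (F I) (le I) u a"
    unfolding U_def using fin by (simp add: sum.inter_filter)
  finally show "Phi F le I u a = U (F I) (le I) u a" .
qed



lemma U_add: "U A le (\<lambda>a. u a + v a) = (\<lambda>a. U A le u a + U A le v a)"
  unfolding U_def by (auto simp: sum.distrib)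

lemma U_smult: "U A le (\<lambda>a. c * u a) = (\<lambda>a. c * U A le u a)"
  unfolding U_def by (auto simp: sum_distrib_left)

lemma U_bij:
  assumes P: "fpos A le"
  shows "bij_betw (U A le :: ('a \<Rightarrow> 'k::comm_ring_1) \<Rightarrow> _) {u. \<forall>a. a \<notin> A \<longrightarrow> u a = 0} {u. \<forall>a. a \<notin> A \<longrightarrow> u a = 0}"
  unfolding bij_betw_def
proof
  have fin: "finite A" using fpos_fin[OF P] .
  show "inj_on (U A le) {u :: 'a \<Rightarrow> 'k. \<forall>a. a \<notin> A \<longrightarrow> u a = 0}"
  proof (rule inj_onI)
    fix u v :: "'a \<Rightarrow> 'k"
    assume u: "u \<in> {u. \<forall>a. a \<notin> A \<longrightarrow> u a = 0}" and v: "v \<in> {u. \<forall>a. a \<notin> A \<longrightarrow> u a = 0}"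
      and e: "U A le u = U A le v"
    have "\<forall>a\<in>A. (\<Sum>x\<in>{x\<in>A. le a x}. u x - v x) = 0"
    proof
      fix a assume a: "a \<in> A"
      have "U A le u a = U A le v a" using e by simp
      then show "(\<Sum>x\<in>{x\<in>A. le a x}. u x - v x) = 0" using a unfolding U_def by (simp add: sum_subtractf)
    qed
    then have d: "\<forall>a\<in>A. u a - v a = 0" by (rule up_zero[OF P])
    show "u = v"
    proof
      fix a show "u a = v a"
      proof (cases "a \<in> A")
        case True then show ?thesis using d by simp
      next
        case False then show ?thesis using u v by simp
      qed
    qed
  qed
  show "U A le ` {u :: 'a \<Rightarrow> 'k. \<forall>a. a \<notin> A \<longrightarrow> u a = 0} = {u. \<forall>a. a \<notin> A \<longrightarrow> u a = 0}"
  proof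
    show "U A le ` {u :: 'a \<Rightarrow> 'k. \<forall>a. a \<notin> A \<longrightarrow> u a = 0} \<subseteq> {u. \<forall>a. a \<notin> A \<longrightarrow> u a = 0}"
      unfolding U_def by auto
    show "{u. \<forall>a. a \<notin> A \<longrightarrow> u a = 0} \<subseteq> U A le ` {u :: 'a \<Rightarrow> 'k. \<forall>a. a \<notin> A \<longrightarrow> u a = 0}"
    proof
      fix v :: "'a \<Rightarrow> 'k" assume v: "v \<in> {u. \<forall>a. a \<notin> A \<longrightarrow> u a = 0}"
      define nu where "nu = (mobius A (\<lambda>x y. le y x) :: 'a \<Rightarrow> 'a \<Rightarrow> 'k)"
      have ns: "mobspec A (\<lambda>x y. le y x) nu" unfolding nu_def by (rule mobius_spec[OF fpos_flip[OF P]])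
      have ns2: "(\<Sum>z\<in>{z\<in>A. le z y \<and> le a z}. nu y z) = (if y = a then 1 else 0)"
        if "y \<in> A" "a \<in> A" "le a y" for y a
        using ns that unfolding mobspec_def by auto
      define u where "u = (\<lambda>x. if x \<in> A then (\<Sum>y\<in>{y\<in>A. le x y}. nu y x * v y) else 0)"
      have "U A le u = v"
      proof
        fix a
        show "U A le u a = v a"
        proof (cases "a \<in> A")
          case False then show ?thesis using v unfolding U_def by simp
        next
          case a: True
          have "U A le u a = (\<Sum>x\<in>A. \<Sum>y\<in>A. if le a x \<and> le x y then nu y x * v y else 0)"
            unfolding U_def u_def using a fin
            by (simp add: sum.inter_filter if_distrib sum_distrib_left cong: if_cong)
             (rule sum.cong, auto simp: sum.inter_filter)
          also have "\<dots> = (\<Sum>y\<in>A. \<Sum>x\<in>A. if le a x \<and> le x y then nu y x * v y else 0)"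
            by (rule sum.swap)
          also have "\<dots> = (\<Sum>y\<in>A. if y = a then v y else 0)"
          proof (rule sum.cong[OF refl])
            fix y assume y: "y \<in> A"
            show "(\<Sum>x\<in>A. if le a x \<and> le x y then nu y x * v y else 0) = (if y = a then v y else 0)"
            proof (cases "le a y")
              case True
              have "(\<Sum>x\<in>A. if le a x \<and> le x y then nu y x * v y else 0)
                    = (\<Sum>x\<in>{z\<in>A. le z y \<and> le a z}. nu y x) * v y"
                using fin by (simp add: sum.inter_filter sum_distrib_right conj_commute) (rule sum.cong, auto)
              also have "\<dots> = (if y = a then v y else 0)" using ns2[OF y a True] by simp
              finally show ?thesis .
            next
              case False
              then have "y \<noteq> a" using fpos_refl[OF P a] by auto
              moreover have "(\<Sum>x\<in>A. if le a x \<and> le x y then nu y x * v y else 0) = 0"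
              proof (rule sum.neutral, rule ballI)
                fix x assume "x \<in> A"
                then have "\<not> (le a x \<and> le x y)" using False fpos_trans[OF P a _ y] by blast
                then show "(if le a x \<and> le x y then nu y x * v y else 0) = 0" by (rule if_not_P)
              qed
              ultimately show ?thesis by simp
            qed
          qed
          also have "\<dots> = v a" using fin a by simp
          finally show ?thesis .
        qed
      qed
      moreover have "u \<in> {u. \<forall>a. a \<notin> A \<longrightarrow> u a = 0}" unfolding u_def by simp
      ultimately show "v \<in> U A le ` {u :: 'a \<Rightarrow> 'k. \<forall>a. a \<notin> A \<longrightarrow> u a = 0}" by blast
    qed
  qed
qed

lemma iso_reflect:
  assumes fA: "finite A" and fB: "finite B" and h: "bij_betw h A B" and k: "bij_betw k B A"
    and mh: "\<forall>x\<in>A. \<forall>y\<in>A. l1 x y \<longrightarrow> l2 (h x) (h y)"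
    and mk: "\<forall>x\<in>B. \<forall>y\<in>B. l2 x y \<longrightarrow> l1 (k x) (k y)"
    and x: "x \<in> A" and y: "y \<in> A" and l: "l2 (h x) (h y)"
  shows "l1 x y"
proof -
  define P1 where "P1 = {p \<in> A \<times> A. l1 (fst p) (snd p)}"
  define P2 where "P2 = {p \<in> B \<times> B. l2 (fst p) (snd p)}"
  have f1: "finite P1" unfolding P1_def using fA by auto
  have f2: "finite P2" unfolding P2_def using fB by auto
  have ih: "inj_on h A" "h ` A = B" using h unfolding bij_betw_def by auto
  have ik: "inj_on k B" "k ` B = A" using k unfolding bij_betw_def by auto
  have i1: "inj_on (map_prod h h) P1" using ih(1) unfolding P1_def inj_on_def by auto
  have s1: "map_prod h h ` P1 \<subseteq> P2" using mh ih(2) unfolding P1_def P2_def by auto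
  have i2: "inj_on (map_prod k k) P2" using ik(1) unfolding P2_def inj_on_def by auto
  have s2: "map_prod k k ` P2 \<subseteq> P1" using mk ik(2) unfolding P1_def P2_def by auto
  have c1: "card P1 \<le> card P2" using card_inj_on_le[OF i1 s1 f2] .
  have c2: "card P2 \<le> card P1" using card_inj_on_le[OF i2 s2 f1] .
  have "card (map_prod h h ` P1) = card P2" using card_image[OF i1] c1 c2 by simp
  then have eq: "map_prod h h ` P1 = P2" using card_subset_eq[OF f2 s1] by simp
  have "(h x, h y) \<in> P2" unfolding P2_def using l x y ih(2) by auto
  then obtain p where p: "p \<in> P1" "map_prod h h p = (h x, h y)" using eq by (metis imageE)
  then have "h (fst p) = h x" "h (snd p) = h y" by (cases p, auto)+
  moreover have "fst p \<in> A" "snd p \<in> A" using p(1) unfolding P1_def by auto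
  ultimately have "fst p = x" "snd p = y" using ih(1) x y unfolding inj_on_def by auto
  then show ?thesis using p(1) unfolding P1_def by auto
qed



lemma nat_lemma:
  assumes fA: "fpos A l1" and fB: "fpos B l2" and h: "bij_betw h A B" and k: "bij_betw k B A"
    and mh: "\<forall>x\<in>A. \<forall>y\<in>A. l1 x y \<longrightarrow> l2 (h x) (h y)"
    and mk: "\<forall>x\<in>B. \<forall>y\<in>B. l2 x y \<longrightarrow> l1 (k x) (k y)"
  shows "U B l2 (\<lambda>b. \<Sum>a\<in>{a\<in>A. h a = b}. (u a :: 'k::comm_ring_1)) = (\<lambda>b. \<Sum>a\<in>{a\<in>A. h a = b}. U A l1 u a)"
proof
  fix b
  define g where "g = inv_into A h"
  have gB: "bij_betw g B A" unfolding g_def using h by (rule bij_betw_inv_into)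
  have hg: "h (g x) = x" if "x \<in> B" for x unfolding g_def using bij_betw_inv_into_right[OF h that] .
  have gh: "g (h x) = x" if "x \<in> A" for x unfolding g_def using bij_betw_inv_into_left[OF h that] .
  have gin: "g x \<in> A" if "x \<in> B" for x using gB that unfolding bij_betw_def by auto
  have hin: "h x \<in> B" if "x \<in> A" for x using h that unfolding bij_betw_def by auto
  have fib: "{a\<in>A. h a = x} = (if x \<in> B then {g x} else {})" for x
    using hg gh gin hin by auto
  have T: "(\<Sum>a\<in>{a\<in>A. h a = x}. w a) = (if x \<in> B then w (g x) else (0::'k))" for x w
    unfolding fib by simp
  show "U B l2 (\<lambda>b. \<Sum>a\<in>{a\<in>A. h a = b}. u a) b = (\<Sum>a\<in>{a\<in>A. h a = b}. U A l1 u a)"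
  proof (cases "b \<in> B")
    case False then show ?thesis unfolding T U_def by simp
  next
    case b: True
    have "U B l2 (\<lambda>b. \<Sum>a\<in>{a\<in>A. h a = b}. u a) b = (\<Sum>x\<in>{x\<in>B. l2 b x}. u (g x))"
      unfolding T U_def using b by simp
    also have "\<dots> = (\<Sum>y\<in>{y\<in>A. l1 (g b) y}. u (g (h y)))"
    proof (rule sum.reindex_bij_betw[symmetric])
      show "bij_betw h {y\<in>A. l1 (g b) y} {x\<in>B. l2 b x}"
        unfolding bij_betw_def
      proof
        show "inj_on h {y\<in>A. l1 (g b) y}" using h unfolding bij_betw_def by (auto intro: inj_on_subset)
        show "h ` {y\<in>A. l1 (g b) y} = {x\<in>B. l2 b x}"
        proof
          show "h ` {y\<in>A. l1 (g b) y} \<subseteq> {x\<in>B. l2 b x}"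
          proof
            fix x assume "x \<in> h ` {y\<in>A. l1 (g b) y}"
            then obtain y where y: "y \<in> A" "l1 (g b) y" "x = h y" by auto
            have "l2 (h (g b)) (h y)" using mh gin[OF b] y by auto
            then show "x \<in> {x\<in>B. l2 b x}" using hg[OF b] hin[OF y(1)] y by auto
          qed
          show "{x\<in>B. l2 b x} \<subseteq> h ` {y\<in>A. l1 (g b) y}"
          proof
            fix x assume x: "x \<in> {x\<in>B. l2 b x}"
            have xB: "x \<in> B" using x by simp
            have "l2 (h (g b)) (h (g x))" using x hg[OF b] hg[OF xB] by auto
            then have "l1 (g b) (g x)"
              by (rule iso_reflect[OF fpos_fin[OF fA] fpos_fin[OF fB] h k mh mk gin[OF b] gin[OF xB]])
            moreover have "x = h (g x)" using hg x by auto
            ultimately show "x \<in> h ` {y\<in>A. l1 (g b) y}" using gin x by auto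
          qed
        qed
      qed
    qed
    also have "\<dots> = (\<Sum>y\<in>{y\<in>A. l1 (g b) y}. u y)"
      by (rule sum.cong) (auto simp: gh)
    also have "\<dots> = U A l1 u (g b)" unfolding U_def using gin[OF b] by simp
    also have "\<dots> = (\<Sum>a\<in>{a\<in>A. h a = b}. U A l1 u a)" unfolding T using b by simp
    finally show ?thesis .
  qed
qed

lemma mult_lemma:
  assumes fS: "fpos (F S) (le S)" and fT: "fpos (F T) (le T)" and fC: "fpos (F (S \<union> T)) (le (S \<union> T))"
    and boxin: "\<forall>y\<in>F S. \<forall>z\<in>F T. Box S T y z \<in> F (S \<union> T)"
    and din: "\<forall>x\<in>F (S \<union> T). fst (Delta S T x) \<in> F S \<and> snd (Delta S T x) \<in> F T"
    and adj: "\<forall>x\<in>F (S \<union> T). \<forall>y\<in>F S. \<forall>z\<in>F T.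
           (le S (fst (Delta S T x)) y \<and> le T (snd (Delta S T x)) z) \<longleftrightarrow> le (S \<union> T) x (Box S T y z)"
  shows "U (F (S \<union> T)) (le (S \<union> T)) (box_mult F Box S T u v)
        = delta_dual_mult F Delta S T (U (F S) (le S) u) (U (F T) (le T) (v :: 'a \<Rightarrow> 'k::comm_ring_1))"
proof
  fix x
  show "U (F (S \<union> T)) (le (S \<union> T)) (box_mult F Box S T u v) x
        = delta_dual_mult F Delta S T (U (F S) (le S) u) (U (F T) (le T) v) x"
  proof (cases "x \<in> F (S \<union> T)")
    case False then show ?thesis unfolding U_def delta_dual_mult_def by simp
  next
    case x: True
    define d1 where "d1 = fst (Delta S T x)"
    define d2 where "d2 = snd (Delta S T x)"
    have d1: "d1 \<in> F S" and d2: "d2 \<in> F T" using din x unfolding d1_def d2_def by auto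
    have finS: "finite (F S)" and finT: "finite (F T)" and finC: "finite (F (S \<union> T))"
      using fpos_fin[OF fS] fpos_fin[OF fT] fpos_fin[OF fC] .
    define S0 where "S0 = {p \<in> F S \<times> F T. le (S \<union> T) x (Box S T (fst p) (snd p))}"
    define gg where "gg = (\<lambda>p. Box S T (fst p) (snd p))"
    have finS0: "finite S0" unfolding S0_def using finS finT by auto
    have "U (F (S \<union> T)) (le (S \<union> T)) (box_mult F Box S T u v) x
        = (\<Sum>w\<in>{w\<in>F (S \<union> T). le (S \<union> T) x w}. \<Sum>p\<in>{p \<in> F S \<times> F T. Box S T (fst p) (snd p) = w}. u (fst p) * v (snd p))"
      unfolding U_def box_mult_def using x by simp
    also have "\<dots> = (\<Sum>w\<in>{w\<in>F (S \<union> T). le (S \<union> T) x w}. \<Sum>p\<in>{p\<in>S0. gg p = w}. u (fst p) * v (snd p))"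
      by (rule sum.cong[OF refl], rule sum.cong) (auto simp: S0_def gg_def)
    also have "\<dots> = (\<Sum>p\<in>S0. u (fst p) * v (snd p))"
    proof (rule sum.group[OF finS0])
      show "finite {w\<in>F (S \<union> T). le (S \<union> T) x w}" using finC by simp
      show "gg ` S0 \<subseteq> {w\<in>F (S \<union> T). le (S \<union> T) x w}" unfolding S0_def gg_def using boxin by auto
    qed
    also have "S0 = {p\<in>F S. le S d1 p} \<times> {q\<in>F T. le T d2 q}"
    proof -
      have a: "\<And>y z. y \<in> F S \<Longrightarrow> z \<in> F T \<Longrightarrow> le (S \<union> T) x (Box S T y z) = (le S d1 y \<and> le T d2 z)"
        using adj x unfolding d1_def d2_def by blast
      show ?thesis unfolding S0_def by (auto simp: a)
    qed
    also have "(\<Sum>p\<in>{p\<in>F S. le S d1 p} \<times> {q\<in>F T. le T d2 q}. u (fst p) * v (snd p))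
        = (\<Sum>p\<in>{p\<in>F S. le S d1 p}. \<Sum>q\<in>{q\<in>F T. le T d2 q}. u p * v q)"
      by (simp add: sum.cartesian_product split_def)
    also have "\<dots> = (\<Sum>p\<in>{p\<in>F S. le S d1 p}. u p) * (\<Sum>q\<in>{q\<in>F T. le T d2 q}. v q)"
      by (simp add: sum_product)
    also have "\<dots> = delta_dual_mult F Delta S T (U (F S) (le S) u) (U (F T) (le T) v) x"
      unfolding delta_dual_mult_def U_def using x d1 d2 by (simp add: d1_def d2_def)
    finally show ?thesis .
  qed
qed


theorem mainTheorem3:
  fixes F :: "'i set \<Rightarrow> 'a set"
    and le :: "'i set \<Rightarrow> 'a \<Rightarrow> 'a \<Rightarrow> bool"
    and Fmap :: "('i \<Rightarrow> 'i) \<Rightarrow> 'i set \<Rightarrow> 'a \<Rightarrow> 'a"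
    and one :: 'a
    and Box :: "'i set \<Rightarrow> 'i set \<Rightarrow> 'a \<Rightarrow> 'a \<Rightarrow> 'a"
    and Delta :: "'i set \<Rightarrow> 'i set \<Rightarrow> 'a \<Rightarrow> 'a \<times> 'a"
  assumes "poset_species F le Fmap one"
    and "poset_monoid F le Fmap one Box"
    and "poset_comonoid F le Fmap one Delta"
    and "adjoint_pair F le Delta Box"
  shows "(\<forall>I. finite I \<longrightarrow>
            (\<forall>(u :: 'a \<Rightarrow> 'k::field_char_0) v. vec F I u \<and> vec F I v \<longrightarrow>
               Phi F le I (\<lambda>a. u a + v a) = (\<lambda>a. Phi F le I u a + Phi F le I v a))
          \<and> (\<forall>(c :: 'k) u. vec F I u \<longrightarrow>
               Phi F le I (\<lambda>a. c * u a) = (\<lambda>a. c * Phi F le I u a))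
          \<and> bij_betw (Phi F le I :: ('a \<Rightarrow> 'k) \<Rightarrow> ('a \<Rightarrow> 'k))
               {u. vec F I u} {u. vec F I u})
       \<and> (\<forall>f I J (u :: 'a \<Rightarrow> 'k). finite I \<and> bij_betw f I J \<and> vec F I u \<longrightarrow>
            Phi F le J (transport F Fmap f I u) = transport F Fmap f I (Phi F le I u))
       \<and> (\<forall>S T (u :: 'a \<Rightarrow> 'k) v. finite S \<and> finite T \<and> S \<inter> T = {}
            \<and> vec F S u \<and> vec F T v \<longrightarrow>
            Phi F le (S \<union> T) (box_mult F Box S T u v)
              = delta_dual_mult F Delta S T (Phi F le S u) (Phi F le T v))"
proof -
  have c1: "\<forall>I. finite I \<longrightarrow> finite (F I) \<and> (\<forall>x\<in>F I. le I x x)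
        \<and> (\<forall>x\<in>F I. \<forall>y\<in>F I. le I x y \<and> le I y x \<longrightarrow> x = y)
        \<and> (\<forall>x\<in>F I. \<forall>y\<in>F I. \<forall>z\<in>F I. le I x y \<and> le I y z \<longrightarrow> le I x z)"
    using assms(1) unfolding poset_species_def by (rule conjunct1)
  have sp: "fpos (F I) (le I)" if "finite I" for I
    unfolding fpos_def using mp[OF spec[OF c1, of I] that] .
  have c2: "\<forall>f I J. finite I \<and> bij_betw f I J \<longrightarrow>
        bij_betw (Fmap f I) (F I) (F J)
        \<and> (\<forall>x\<in>F I. \<forall>y\<in>F I. le I x y \<longrightarrow> le J (Fmap f I x) (Fmap f I y))"
    using assms(1) unfolding poset_species_def by (elim conjE) assumption
  have fm: "bij_betw (Fmap f I) (F I) (F J)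
        \<and> (\<forall>x\<in>F I. \<forall>y\<in>F I. le I x y \<longrightarrow> le J (Fmap f I x) (Fmap f I y))"
    if "finite I" "bij_betw f I J" for f I J
    using mp[OF spec[OF spec[OF spec[OF c2, of f], of I], of J] conjI[OF that]] .
  have c3a: "\<forall>S T. finite S \<and> finite T \<and> S \<inter> T = {} \<longrightarrow>
        (\<forall>y\<in>F S. \<forall>z\<in>F T. Box S T y z \<in> F (S \<union> T))
        \<and> (\<forall>y\<in>F S. \<forall>y'\<in>F S. \<forall>z\<in>F T. \<forall>z'\<in>F T.
              le S y y' \<and> le T z z' \<longrightarrow> le (S \<union> T) (Box S T y z) (Box S T y' z'))
        \<and> (\<forall>f J. bij_betw f (S \<union> T) J \<longrightarrow>
              (\<forall>y\<in>F S. \<forall>z\<in>F T.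
                 Fmap f (S \<union> T) (Box S T y z) = Box (f ` S) (f ` T) (Fmap f S y) (Fmap f T z)))"
    using assms(2) unfolding poset_monoid_def by (rule conjunct1)
  have c3: "\<forall>y\<in>F S. \<forall>z\<in>F T. Box S T y z \<in> F (S \<union> T)"
    if "finite S \<and> finite T \<and> S \<inter> T = {}" for S T
    using conjunct1[OF mp[OF spec[OF spec[OF c3a, of S], of T] that]] .
  have c4a: "\<forall>S T. finite S \<and> finite T \<and> S \<inter> T = {} \<longrightarrow>
        (\<forall>x\<in>F (S \<union> T). fst (Delta S T x) \<in> F S \<and> snd (Delta S T x) \<in> F T)
        \<and> (\<forall>x\<in>F (S \<union> T). \<forall>x'\<in>F (S \<union> T). le (S \<union> T) x x' \<longrightarrow>
              le S (fst (Delta S T x)) (fst (Delta S T x'))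
              \<and> le T (snd (Delta S T x)) (snd (Delta S T x')))
        \<and> (\<forall>f J. bij_betw f (S \<union> T) J \<longrightarrow>
              (\<forall>x\<in>F (S \<union> T).
                 Delta (f ` S) (f ` T) (Fmap f (S \<union> T) x)
                 = (Fmap f S (fst (Delta S T x)), Fmap f T (snd (Delta S T x)))))"
    using assms(3) unfolding poset_comonoid_def by (rule conjunct1)
  have c4: "\<forall>x\<in>F (S \<union> T). fst (Delta S T x) \<in> F S \<and> snd (Delta S T x) \<in> F T"
    if "finite S \<and> finite T \<and> S \<inter> T = {}" for S T
    using conjunct1[OF mp[OF spec[OF spec[OF c4a, of S], of T] that]] .
  have c5: "\<forall>S T. finite S \<and> finite T \<and> S \<inter> T = {} \<longrightarrow>
        (\<forall>x\<in>F (S \<union> T). \<forall>y\<in>F S. \<forall>z\<in>F T.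
           (le S (fst (Delta S T x)) y \<and> le T (snd (Delta S T x)) z)
           \<longleftrightarrow> le (S \<union> T) x (Box S T y z))"
    using assms(4) unfolding adjoint_pair_def .
  have PE: "Phi F le I u = U (F I) (le I) u" if "finite I" for I and u :: "'a \<Rightarrow> 'k"
    by (rule Phi_eq[where F=F and le=le], rule sp[OF that])
  have vecset: "{u. vec F I u} = {u. \<forall>a. a \<notin> F I \<longrightarrow> u a = 0}" for I and u :: "'a \<Rightarrow> 'k"
    unfolding vec_def ..
  have P1: "\<forall>I. finite I \<longrightarrow>
            (\<forall>(u :: 'a \<Rightarrow> 'k::field_char_0) v. vec F I u \<and> vec F I v \<longrightarrow>
               Phi F le I (\<lambda>a. u a + v a) = (\<lambda>a. Phi F le I u a + Phi F le I v a))
          \<and> (\<forall>(c :: 'k) u. vec F I u \<longrightarrow>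
               Phi F le I (\<lambda>a. c * u a) = (\<lambda>a. c * Phi F le I u a))
          \<and> bij_betw (Phi F le I :: ('a \<Rightarrow> 'k) \<Rightarrow> ('a \<Rightarrow> 'k))
               {u. vec F I u} {u. vec F I u}"
  proof (intro allI impI)
    fix I :: "'i set" assume fI: "finite I"
    have pe: "Phi F le I = (U (F I) (le I) :: ('a \<Rightarrow> 'k) \<Rightarrow> _)"
      using PE[OF fI] by (intro ext) simp
    show "(\<forall>(u :: 'a \<Rightarrow> 'k::field_char_0) v. vec F I u \<and> vec F I v \<longrightarrow>
               Phi F le I (\<lambda>a. u a + v a) = (\<lambda>a. Phi F le I u a + Phi F le I v a))
          \<and> (\<forall>(c :: 'k) u. vec F I u \<longrightarrow>
               Phi F le I (\<lambda>a. c * u a) = (\<lambda>a. c * Phi F le I u a))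
          \<and> bij_betw (Phi F le I :: ('a \<Rightarrow> 'k) \<Rightarrow> ('a \<Rightarrow> 'k))
               {u. vec F I u} {u. vec F I u}"
      unfolding pe vecset using U_add U_smult U_bij[OF sp[OF fI]] by blast
  qed
  have P2: "\<forall>f I J (u :: 'a \<Rightarrow> 'k). finite I \<and> bij_betw f I J \<and> vec F I u \<longrightarrow>
            Phi F le J (transport F Fmap f I u) = transport F Fmap f I (Phi F le I u)"
  proof (intro allI impI)
    fix f :: "'i \<Rightarrow> 'i" and I J :: "'i set" and u :: "'a \<Rightarrow> 'k"
    assume a: "finite I \<and> bij_betw f I J \<and> vec F I u"
    have fI: "finite I" and b: "bij_betw f I J" using a by auto
    have fJ: "finite J" using bij_betw_finite[OF b] fI by simp
    have bi: "bij_betw (inv_into I f) J I" using b by (rule bij_betw_inv_into)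
    note m1 = fm[OF fI b] and m2 = fm[OF fJ bi]
    have "Phi F le J (transport F Fmap f I u) = U (F J) (le J) (\<lambda>b. \<Sum>a\<in>{a\<in>F I. Fmap f I a = b}. u a)"
      unfolding transport_def by (rule PE[OF fJ])
    also have "\<dots> = (\<lambda>b. \<Sum>a\<in>{a\<in>F I. Fmap f I a = b}. U (F I) (le I) u a)"
      using nat_lemma[OF sp[OF fI] sp[OF fJ] conjunct1[OF m1] conjunct1[OF m2] conjunct2[OF m1] conjunct2[OF m2]] .
    also have "\<dots> = transport F Fmap f I (Phi F le I u)"
      unfolding transport_def PE[OF fI] ..
    finally show "Phi F le J (transport F Fmap f I u) = transport F Fmap f I (Phi F le I u)" .
  qed
  have P3: "\<forall>S T (u :: 'a \<Rightarrow> 'k) v. finite S \<and> finite T \<and> S \<inter> T = {}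
            \<and> vec F S u \<and> vec F T v \<longrightarrow>
            Phi F le (S \<union> T) (box_mult F Box S T u v)
              = delta_dual_mult F Delta S T (Phi F le S u) (Phi F le T v)"
  proof (intro allI impI)
    fix S T :: "'i set" and u v :: "'a \<Rightarrow> 'k"
    assume a: "finite S \<and> finite T \<and> S \<inter> T = {} \<and> vec F S u \<and> vec F T v"
    have h: "finite S \<and> finite T \<and> S \<inter> T = {}" using a by auto
    have fS: "finite S" and fT: "finite T" and fC: "finite (S \<union> T)" using a by auto
    show "Phi F le (S \<union> T) (box_mult F Box S T u v)
              = delta_dual_mult F Delta S T (Phi F le S u) (Phi F le T v)"
      unfolding PE[OF fS] PE[OF fT] PE[OF fC]
      by (rule mult_lemma[where F=F and le=le and S=S and T=T and Box=Box and Delta=Delta, OF sp[OF fS] sp[OF fT] sp[OF fC] c3[OF h] c4[OF h] mp[OF spec[OF spec[OF c5, of S], of T] h]])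
  qed
  show ?thesis using P1 P2 P3 by blast
qed

end
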